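(* Let $G$ be a finite abelian group and let $B\subset G$ be an irreducible balanced set. Then there exists $g\in -B$ such that $\Sigma(B+g)=\langle B+g\rangle$. That is, $B+g$ is an additive basis for the subgroup generated by $B+g$.
   Context: A set $B\subset G$ is balanced if for every $b\in B$ there exist distinct $b_1,b_2\in B$ with $2b=b_1+b_2$. A balanced set $B$ is irreducible if it does not contain two disjoint balanced subsets. For a finite set $S$, $\Sigma(S)=\{\sum_{s\in S'}s:S'\subseteq S\}$, and $\langle S\rangle$ denotes the subgroup of $G$ generated by $S$. *)

theory Defs
  imports Main
begin

text \<open>Balanced set (nonempty, as implicit in the paper): every element b has
  distinct b1, b2 in B with 2b = b1 + b2.\<close>
definition balanced :: "'a::ab_group_add set \<Rightarrow> bool" where
  "balanced B \<longleftrightarrow> B \<noteq> {} \<and>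
     (\<forall>b\<in>B. \<exists>b1\<in>B. \<exists>b2\<in>B. b1 \<noteq> b2 \<and> b + b = b1 + b2)"

definition irreducible_balanced :: "'a::ab_group_add set \<Rightarrow> bool" where
  "irreducible_balanced B \<longleftrightarrow> balanced B \<and>
     \<not> (\<exists>B1 B2. B1 \<subseteq> B \<and> B2 \<subseteq> B \<and> B1 \<inter> B2 = {} \<and> balanced B1 \<and> balanced B2)"

definition subset_sums :: "'a::comm_monoid_add set \<Rightarrow> 'a set" where
  "subset_sums S = {sum (\<lambda>s. s) S' | S'. S' \<subseteq> S}"

definition gen_subgroup :: "'a::ab_group_add set \<Rightarrow> 'a set" where
  "gen_subgroup S = \<Inter>{H. 0 \<in> H \<and> (\<forall>x\<in>H. \<forall>y\<in>H. x + y \<in> H) \<and> (\<forall>x\<in>H. - x \<in> H) \<and> S \<subseteq> H}"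

end

theory Submission
  imports Defs "HOL-Library.Multiset"
begin

definition mrel :: "'a::ab_group_add set \<Rightarrow> ('a \<times> 'a) set" where
  "mrel S = {(x,y). x \<in> S \<and> y \<in> S \<and> (\<exists>z\<in>S. y \<noteq> z \<and> x + x = y + z)}"

lemma mrel_rtrancl_mem:
  assumes "(x,y) \<in> (mrel S)\<^sup>*" "x \<in> S" shows "y \<in> S"
  using assms by (induction rule: rtrancl_induct) (auto simp: mrel_def)

lemma mrel_translate:
  fixes g :: "'a::ab_group_add"
  assumes "(x,y) \<in> (mrel B)\<^sup>*"
  shows "(x+g, y+g) \<in> (mrel ((\<lambda>x. x+g) ` B))\<^sup>*"
  using assms
proof (induction rule: rtrancl_induct)
  case base then show ?case by simp
next
  case (step y z)
  from step(2) obtain w where w: "y \<in> B" "z \<in> B" "w \<in> B" "z \<noteq> w" "y + y = z + w"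
    by (auto simp: mrel_def)
  have h: "y+g \<in> (\<lambda>x. x+g) ` B" "z+g \<in> (\<lambda>x. x+g) ` B" "w+g \<in> (\<lambda>x. x+g) ` B"
    "z+g \<noteq> w+g" "(y+g)+(y+g) = (z+g)+(w+g)"
    using w by (auto simp: algebra_simps)
  have "(y+g, z+g) \<in> mrel ((\<lambda>x. x+g) ` B)"
    unfolding mrel_def using h by blast
  then show ?case using step(3) by simp
qed

lemma choose_root:
  fixes B :: "'a::{ab_group_add, finite} set"
  assumes irr: "irreducible_balanced B"
  shows "\<exists>b\<in>B. \<forall>c\<in>B. (c,b) \<in> (mrel B)\<^sup>*"
proof -
  define R where "R = mrel B"
  define Re where "Re c = {x. (c,x) \<in> R\<^sup>*}" for c
  have bal: "balanced B" using irr by (simp add: irreducible_balanced_def)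
  then obtain b0 where "b0 \<in> B" by (auto simp: balanced_def)
  then obtain b where b: "b \<in> B" and bmin: "\<forall>c. c \<in> B \<longrightarrow> card (Re b) \<le> card (Re c)"
    using ex_has_least_nat[of "\<lambda>c. c \<in> B" b0 "\<lambda>c. card (Re c)"] by blast
  have ReB: "Re c \<subseteq> B" if "c \<in> B" for c
    using that mrel_rtrancl_mem unfolding Re_def R_def by blast
  define T where "T = Re b"
  have TB: "T \<subseteq> B" using ReB b T_def by simp
  have backr: "(t,b) \<in> R\<^sup>*" if "t \<in> T" for t
  proof -
    have tB: "t \<in> B" using that TB by auto
    have sub: "Re t \<subseteq> T" using that unfolding T_def Re_def by (auto intro: rtrancl_trans)
    have "card T \<le> card (Re t)" using bmin tB T_def by simp
    then have "Re t = T" using sub by (metis card_subset_eq finite le_antisym card_mono)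
    then have "b \<in> Re t" unfolding T_def Re_def by simp
    then show ?thesis unfolding Re_def by simp
  qed
  have balT: "balanced T"
    unfolding balanced_def
  proof (intro conjI ballI)
    show "T \<noteq> {}" unfolding T_def Re_def by auto
  next
    fix t assume tT: "t \<in> T"
    then have tB: "t \<in> B" using TB by auto
    from bal tB obtain t1 t2 where h: "t1 \<in> B" "t2 \<in> B" "t1 \<noteq> t2" "t + t = t1 + t2"
      unfolding balanced_def by blast
    then have "(t,t1) \<in> R" "(t,t2) \<in> R" unfolding R_def mrel_def using tB
      by (auto simp: add.commute intro!: bexI[of _ t1] bexI[of _ t2])
    then have "t1 \<in> T" "t2 \<in> T" using tT unfolding T_def Re_def
      by (auto intro: rtrancl_into_rtrancl)
    then show "\<exists>b1\<in>T. \<exists>b2\<in>T. b1 \<noteq> b2 \<and> t + t = b1 + b2" using h by blast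
  qed
  define U where "U = {c \<in> B. (c,b) \<notin> R\<^sup>*}"
  have "U = {}"
  proof (rule ccontr)
    assume ne: "U \<noteq> {}"
    have balU: "balanced U"
      unfolding balanced_def
    proof (intro conjI ballI)
      show "U \<noteq> {}" by fact
    next
      fix t assume tU: "t \<in> U"
      then have tB: "t \<in> B" unfolding U_def by auto
      from bal tB obtain t1 t2 where h: "t1 \<in> B" "t2 \<in> B" "t1 \<noteq> t2" "t + t = t1 + t2"
        unfolding balanced_def by blast
      then have r: "(t,t1) \<in> R" "(t,t2) \<in> R" unfolding R_def mrel_def using tB
        by (auto simp: add.commute)
      have "t1 \<in> U" "t2 \<in> U" using tU h r unfolding U_def
        by (auto intro: converse_rtrancl_into_rtrancl)
      then show "\<exists>b1\<in>U. \<exists>b2\<in>U. b1 \<noteq> b2 \<and> t + t = b1 + b2" using h by blast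
    qed
    have "U \<inter> T = {}" using backr unfolding U_def by auto
    moreover have "U \<subseteq> B" unfolding U_def by auto
    ultimately show False using irr balU balT TB
      unfolding irreducible_balanced_def by blast
  qed
  then show ?thesis using b unfolding U_def R_def by auto
qed


lemma subset_sums_mem:
  assumes "finite S" "S \<subseteq> A" shows "sum (\<lambda>x. x) S \<in> subset_sums A"
  using assms unfolding subset_sums_def by blast

lemma msums_in_subset_sums:
  fixes A :: "'a::ab_group_add set" and w :: "'a \<Rightarrow> nat"
  assumes w0: "w 0 = 0"
  and fire: "\<And>c. c \<in> A \<Longrightarrow> c \<noteq> 0 \<Longrightarrow> \<exists>y\<in>A. \<exists>z\<in>A. y \<noteq> z \<and> c + c = y + z \<and> w y + w z < 2 * w c"
  shows "set_mset M \<subseteq> A \<Longrightarrow> sum_mset M \<in> subset_sums A"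
proof (induction "sum_mset (image_mset w M)" arbitrary: M rule: less_induct)
  case (less M)
  define M' where "M' = filter_mset (\<lambda>x. x \<noteq> 0) M"
  define Z where "Z = filter_mset (\<lambda>x. \<not> x \<noteq> 0) M"
  have MZ: "M = M' + Z" unfolding M'_def Z_def by (rule multiset_partition)
  have Z0: "sum_mset Z = 0" unfolding Z_def by (induction M) auto
  have sumeq: "sum_mset M' = sum_mset M" using MZ Z0 by (metis add.right_neutral sum_mset.union)
  have wle: "sum_mset (image_mset w M') \<le> sum_mset (image_mset w M)"
    using MZ by (metis image_mset_union le_add1 sum_mset.union)
  have M'A: "set_mset M' \<subseteq> A" using less.prems unfolding M'_def by auto
  have M'0: "0 \<notin># M'" unfolding M'_def by auto
  show ?case
  proof (cases "\<exists>c. count M' c \<ge> 2")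
    case True
    then obtain c where c: "count M' c \<ge> 2" by blast
    then have cM: "c \<in># M'" by (simp flip: count_greater_zero_iff)
    then have cA: "c \<in> A" and cn0: "c \<noteq> 0" using M'A M'0 by auto
    obtain y z where yz: "y \<in> A" "z \<in> A" "y \<noteq> z" "c + c = y + z" "w y + w z < 2 * w c"
      using fire[OF cA cn0] by blast
    define X where "X = {#c, c#}"
    have XM: "X \<subseteq># M'" unfolding X_def using c by (simp add: subseteq_mset_def)
    define N where "N = (M' - X) + {#y, z#}"
    have M'eq: "M' = (M' - X) + X" using XM by simp
    have "sum_mset N = sum_mset (M' - X) + (y + z)" unfolding N_def by (simp add: add.assoc)
    also have "\<dots> = sum_mset (M' - X) + (c + c)" using yz by simp
    also have "\<dots> = sum_mset ((M' - X) + X)" unfolding X_def by simp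
    also have "\<dots> = sum_mset M'" using M'eq by simp
    finally have sN: "sum_mset N = sum_mset M" using sumeq by simp
    have wN: "sum_mset (image_mset w N) = sum_mset (image_mset w (M' - X)) + (w y + w z)"
      unfolding N_def by simp
    have wM': "sum_mset (image_mset w M') = sum_mset (image_mset w (M' - X)) + 2 * w c"
    proof -
      have "sum_mset (image_mset w M') = sum_mset (image_mset w ((M' - X) + X))" using M'eq by simp
      also have "\<dots> = sum_mset (image_mset w (M' - X)) + 2 * w c" unfolding X_def by simp
      finally show ?thesis .
    qed
    have lt: "sum_mset (image_mset w N) < sum_mset (image_mset w M)"
      using wN wM' wle yz(5) by linarith
    have NA: "set_mset N \<subseteq> A" unfolding N_def using M'A yz(1,2) by (auto dest: in_diffD)
    have "sum_mset N \<in> subset_sums A" using less.hyps[OF lt NA] .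
    then show ?thesis using sN by simp
  next
    case False
    have cnt: "count M' x \<le> 1" for x
    proof -
      have "count M' x < 2" using False by (simp add: not_le)
      then show ?thesis by linarith
    qed
    have eq: "M' = mset_set (set_mset M')"
    proof (rule multiset_eqI)
      fix x show "count M' x = count (mset_set (set_mset M')) x"
      proof (cases "x \<in># M'")
        case True
        then have "count M' x \<noteq> 0" by (metis not_in_iff)
        then have "count M' x = 1" using cnt[of x] by linarith
        then show ?thesis using True by (simp add: count_mset_set)
      next
        case False
        then have "count M' x = 0" by (metis not_in_iff)
        then show ?thesis using False by (simp add: count_mset_set)
      qed
    qed
    have "sum_mset M' = sum (\<lambda>x. x) (set_mset M')"
      by (subst eq) (simp add: sum_unfold_sum_mset)
    then show ?thesis using sumeq subset_sums_mem[OF finite_set_mset M'A] by simp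
  qed
qed


lemma weights_exist:
  fixes A :: "'a::ab_group_add set"
  assumes fin: "finite A" and reach: "\<forall>c\<in>A. (c,0) \<in> (mrel A)\<^sup>*"
  shows "\<exists>w::'a\<Rightarrow>nat. w 0 = 0 \<and> (\<forall>c\<in>A. c \<noteq> 0 \<longrightarrow>
           (\<exists>y\<in>A. \<exists>z\<in>A. y \<noteq> z \<and> c + c = y + z \<and> w y + w z < 2 * w c))"
proof -
  define R where "R = mrel A"
  define d where "d c = (LEAST n. (c,0) \<in> R^^n)" for c
  have dex: "(c,0) \<in> R^^(d c)" if "c \<in> A" for c
  proof -
    from reach that obtain n where "(c,0) \<in> R^^n" unfolding R_def by (auto simp: rtrancl_power)
    then show ?thesis unfolding d_def by (rule LeastI)
  qed
  have dle: "d c \<le> n" if "(c,0) \<in> R^^n" for c n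
    unfolding d_def using that by (rule Least_le)
  have d0: "d 0 = 0" using dle[of 0 0] by simp
  define D where "D = Max (d ` A)"
  have dD: "d c \<le> D" if "c \<in> A" for c unfolding D_def using fin that by simp
  define w :: "'a \<Rightarrow> nat" where "w x = 2^D - 2^(D - d x)" for x
  have w0: "w 0 = (0::nat)" unfolding w_def d0 by simp
  have "\<exists>y\<in>A. \<exists>z\<in>A. y \<noteq> z \<and> c + c = y + z \<and> w y + w z < 2 * w c"
    if cA: "c \<in> A" and cn0: "c \<noteq> 0" for c
  proof -
    have "d c \<noteq> 0"
    proof
      assume "d c = 0"
      then have "(c,0) \<in> R^^0" using dex[OF cA] by simp
      then show False using cn0 by simp
    qed
    then obtain n where dn: "d c = Suc n" by (cases "d c") auto
    obtain y where y1: "(c,y) \<in> R" and y2: "(y,0) \<in> R^^n"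
      using relpow_Suc_D2[of c 0 n R] dex[OF cA] dn by auto
    from y1 obtain z where yz: "y \<in> A" "z \<in> A" "y \<noteq> z" "c + c = y + z"
      unfolding R_def mrel_def by auto
    have dy: "d y \<le> n" using dle[OF y2] .
    have dz: "d z \<le> D" using dD[OF yz(2)] .
    have dcD: "Suc n \<le> D" using dD[OF cA] dn by simp
    define k where "k = D - Suc n"
    have e1: "(2::nat)^(Suc k) \<le> 2^(D - d y)" by (rule power_increasing) (use dy dcD k_def in auto)
    have e2: "(2::nat)^(D - d y) \<le> 2^D" by (rule power_increasing) auto
    have e3: "(1::nat) \<le> 2^(D - d z)" by simp
    have e4: "(2::nat)^(D - d z) \<le> 2^D" by (rule power_increasing) auto
    have e5: "(2::nat)^(D - d c) = 2^k" using dn k_def by simp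
    have ar: "(a - Y) + (a - Z) < 2 * (a - p)"
      if "2 * p \<le> Y" "Y \<le> a" "1 \<le> Z" "Z \<le> a" for a Y Z p :: nat
      using that by arith
    have "w y + w z < 2 * w c" unfolding w_def e5
      using ar[of "2^k" "2^(D - d y)" "2^D" "2^(D - d z)"] e1 e2 e3 e4 by simp
    then show ?thesis using yz by blast
  qed
  then show ?thesis using w0 by blast
qed


lemma sum_in_subgroup:
  fixes H :: "'a::ab_group_add set"
  assumes "0 \<in> H" "\<forall>x\<in>H. \<forall>y\<in>H. x + y \<in> H" "finite S" "S \<subseteq> H"
  shows "sum (\<lambda>x. x) S \<in> H"
  using assms(3,4)
proof (induction S rule: finite_induct)
  case empty then show ?case using assms(1) by simp
next
  case (insert x F) then show ?case using assms(2) by simp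
qed

lemma subset_sums_gen:
  fixes A :: "'a::{ab_group_add,finite} set"
  assumes ms: "\<And>M. set_mset M \<subseteq> A \<Longrightarrow> sum_mset M \<in> subset_sums A"
  shows "subset_sums A = gen_subgroup A"
proof
  show "subset_sums A \<subseteq> gen_subgroup A"
  proof
    fix x assume "x \<in> subset_sums A"
    then obtain S where S: "x = sum (\<lambda>s. s) S" "S \<subseteq> A" unfolding subset_sums_def by blast
    show "x \<in> gen_subgroup A"
      unfolding gen_subgroup_def
    proof (rule InterI)
      fix H assume "H \<in> {H. 0 \<in> H \<and> (\<forall>x\<in>H. \<forall>y\<in>H. x + y \<in> H) \<and> (\<forall>x\<in>H. - x \<in> H) \<and> A \<subseteq> H}"
      then have H: "0 \<in> H" "\<forall>x\<in>H. \<forall>y\<in>H. x + y \<in> H" "A \<subseteq> H" by auto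
      show "x \<in> H" using sum_in_subgroup[OF H(1,2) finite, of S] S H(3) by auto
    qed
  qed
next
  define MS where "MS = {sum_mset M | M. set_mset M \<subseteq> A}"
  have MSsub: "MS \<subseteq> subset_sums A" unfolding MS_def using ms by blast
  have z: "0 \<in> MS" unfolding MS_def by (rule CollectI, rule exI[of _ "{#}"]) simp
  have pl: "\<forall>x\<in>MS. \<forall>y\<in>MS. x + y \<in> MS"
  proof (intro ballI)
    fix x y assume "x \<in> MS" "y \<in> MS"
    then obtain M N where "x = sum_mset M" "set_mset M \<subseteq> A" "y = sum_mset N" "set_mset N \<subseteq> A"
      unfolding MS_def by blast
    then show "x + y \<in> MS" unfolding MS_def
      by (intro CollectI exI[of _ "M + N"]) auto
  qed
  have AMS: "A \<subseteq> MS"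
  proof
    fix a assume "a \<in> A"
    then show "a \<in> MS" unfolding MS_def by (intro CollectI exI[of _ "{#a#}"]) auto
  qed
  have ng: "\<forall>x\<in>MS. - x \<in> MS"
  proof
    fix x assume xM: "x \<in> MS"
    have "(\<lambda>y. x + y) ` MS = MS"
      by (rule endo_inj_surj) (use pl xM in \<open>auto simp: inj_on_def\<close>)
    then have "0 \<in> (\<lambda>y. x + y) ` MS" using z by simp
    then obtain y where "y \<in> MS" "x + y = 0" by auto
    then show "- x \<in> MS" by (metis add.commute add_minus_cancel add.right_neutral)
  qed
  have "gen_subgroup A \<subseteq> MS"
    unfolding gen_subgroup_def using z pl ng AMS by (intro Inter_lower) blast
  then show "gen_subgroup A \<subseteq> subset_sums A" using MSsub by blast
qed

theorem proposition4p6: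
  fixes B :: "'a::{ab_group_add, finite} set"
  assumes "irreducible_balanced B"
  shows "\<exists>g \<in> uminus ` B. subset_sums ((\<lambda>b. b + g) ` B) = gen_subgroup ((\<lambda>b. b + g) ` B)"
proof -
  obtain b where bB: "b \<in> B" and rb: "\<forall>c\<in>B. (c,b) \<in> (mrel B)\<^sup>*"
    using choose_root[OF assms] by blast
  define g where "g = - b"
  define A where "A = (\<lambda>x. x + g) ` B"
  have reach: "\<forall>c\<in>A. (c,0) \<in> (mrel A)\<^sup>*"
  proof
    fix c assume "c \<in> A"
    then obtain c0 where c0: "c0 \<in> B" "c = c0 + g" unfolding A_def by auto
    have "(c0 + g, b + g) \<in> (mrel A)\<^sup>*" unfolding A_def by (rule mrel_translate) (use rb c0 in auto)
    then show "(c,0) \<in> (mrel A)\<^sup>*" using c0 g_def by simp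
  qed
  obtain w :: "'a \<Rightarrow> nat" where w0: "w 0 = 0" and wf: "\<forall>c\<in>A. c \<noteq> 0 \<longrightarrow>
           (\<exists>y\<in>A. \<exists>z\<in>A. y \<noteq> z \<and> c + c = y + z \<and> w y + w z < 2 * w c)"
    using weights_exist[OF finite reach] by blast
  have "subset_sums A = gen_subgroup A"
    by (rule subset_sums_gen, rule msums_in_subset_sums[of w]) (use w0 wf in auto)
  moreover have "g \<in> uminus ` B" using bB g_def by simp
  ultimately show ?thesis unfolding A_def by blast
qed

end
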